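(* Let $\chi=(X,\{e_i\},\{\gamma_i\},\{\varepsilon_i\})$ be a $\mathfrak g$-geometric crystal, let $f$ be an upper (resp. lower) half-decoration on $\chi$, and let $\theta:T'\to X$ be a positive structure for $(\chi,f)$. Let $(X_*(T')\cong\mathbb Z^{\dim T'},\{\tilde e_i\},\{{\rm wt}_i\},\{\tilde\varepsilon_i\})$ be the tropicalized (Langlands dual, ${}^L\mathfrak g$-) crystal, $\tilde f$ the tropicalization of $f\circ\theta$, and $\widetilde B_{\theta,f}:=\{\tilde x\in X_*(T')\mid \tilde f(\tilde x)\ge 0\}$, where $\tilde e_i^{\,n}(\tilde x)$ is declared to be $0$ whenever it does not lie in $\widetilde B_{\theta,f}$ (and $\tilde f_i=\tilde e_i^{-1}$). Then $\widetilde B_{\theta,f}$ with the restricted structure is an upper (resp. lower) normal crystal, i.e. for every $b\in\widetilde B_{\theta,f}$ and $i\in I$, $\tilde\varepsilon_i(b)=\max\{n\ge0\mid \tilde e_i^{\,n}b\in\widetilde B_{\theta,f}\}$ (resp. $\tilde\varphi_i(b)=\max\{n\ge0\mid \tilde f_i^{\,n}b\in\widetilde B_{\theta,f}\}$, where $\tilde\varphi_i=\tilde\varepsilon_i+{\rm wt}_i$).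
   Context: Setting: $\mathfrak g$ simple with Cartan matrix $A=(a_{ij})$, $a_{ij}=\alpha_j(h_i)$. A $\mathfrak g$-geometric crystal is $(X,\{e_i\}_{i\in I},\{\gamma_i\}_{i\in I},\{\varepsilon_i\}_{i\in I})$ where $X$ is an irreducible complex algebraic variety, $\gamma_i,\varepsilon_i$ are rational functions on $X$, and $e_i:\mathbb C^\times\times X\to X$, $(c,x)\mapsto e_i^c(x)$, are unital rational $\mathbb C^\times$-actions, such that $(\{1\}\times X)\cap{\rm dom}(e_i)$ is open dense in $\{1\}\times X$; $\gamma_j(e_i^c(x))=c^{a_{ij}}\gamma_j(x)$; the $e_i$ satisfy the Verma relations ($e_i^{c_1}e_j^{c_2}=e_j^{c_2}e_i^{c_1}$ if $a_{ij}=a_{ji}=0$; $e_i^{c_1}e_j^{c_1c_2}e_i^{c_2}=e_j^{c_2}e_i^{c_1c_2}e_j^{c_1}$ if $a_{ij}=a_{ji}=-1$; $e_i^{c_1}e_j^{c_1^2c_2}e_i^{c_1c_2}e_j^{c_2}=e_j^{c_2}e_i^{c_1c_2}e_j^{c_1^2c_2}e_i^{c_1}$ if $a_{ij}=-2,a_{ji}=-1$; $e_i^{c_1}e_j^{c_1^3c_2}e_i^{c_1^2c_2}e_j^{c_1^3c_2^2}e_i^{c_1c_2}e_j^{c_2}=e_j^{c_2}e_i^{c_1c_2}e_j^{c_1^3c_2^2}e_i^{c_1^2c_2}e_j^{c_1^3c_2}e_i^{c_1}$ if $a_{ij}=-3,a_{ji}=-1$); and $\varepsilon_i(e_i^c(x))=c^{-1}\varepsilon_i(x)$,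 $\varepsilon_i(e_j^c(x))=\varepsilon_i(x)$ if $a_{ij}=a_{ji}=0$. Put $\varphi_i:=\varepsilon_i\gamma_i$. A rational function $f$ on $X$ is an upper half-decoration if $f(e_i^c(x))=f(x)+(c^{-1}-1)\varepsilon_i(x)$, and a lower half-decoration if $f(e_i^c(x))=f(x)+(c-1)\varphi_i(x)$, for all $i,c,x$. A positive structure is a birational map $\theta:T'\to X$ from an algebraic torus $T'\cong(\mathbb C^\times)^m$ such that $\theta^{-1}\circ e_i\circ\theta:\mathbb C^\times\times T'\to T'$ and $\gamma_i\circ\theta,\varepsilon_i\circ\theta,f\circ\theta$ are positive rational maps (in the torus coordinates, ratios of polynomials with positive coefficients). Tropicalization of a positive rational function in coordinates $c_1,\dots,c_m$ (and $c$) is the piecewise-linear function on $\mathbb Z^m$ (and $\mathbb Z$) obtained by the valuation $\mathbb V(g)=-\deg g(x^{-1})$, i.e. replacing multiplication by $+$, division by $-$, addition by $\min$, positive constants by $0$, and $c_j$ by $x_j$. Thus $\tilde e_i^{\,n}$ ($n\in\mathbb Z$) is the tropicalization of $\theta^{-1}\circ e_i^c\circ\theta$, ${\rm wt}_i$ that of $\gamma_i\circ\theta$, $\tilde\varepsilon_i$ that of $\varepsilon_i\circ\theta$; $\tilde e_i=\tilde e_i^{\,1}$, $\tilde f_i=\tilde e_i^{\,-1}$. *)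

theory Defs
  imports Complex_Main
begin

datatype 'v pexp =
    PVar 'v
  | PConst real
  | PAdd "'v pexp" "'v pexp"
  | PMul "'v pexp" "'v pexp"
  | PDiv "'v pexp" "'v pexp"

fun pos_exp :: "'v pexp \<Rightarrow> bool" where
  "pos_exp (PVar v) = True"
| "pos_exp (PConst r) = (r > 0)"
| "pos_exp (PAdd p q) = (pos_exp p \<and> pos_exp q)"
| "pos_exp (PMul p q) = (pos_exp p \<and> pos_exp q)"
| "pos_exp (PDiv p q) = (pos_exp p \<and> pos_exp q)"

fun peval :: "('v \<Rightarrow> real) \<Rightarrow> 'v pexp \<Rightarrow> real" where
  "peval x (PVar v) = x v"
| "peval x (PConst r) = r"
| "peval x (PAdd p q) = peval x p + peval x q"
| "peval x (PMul p q) = peval x p * peval x q"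
| "peval x (PDiv p q) = peval x p / peval x q"

fun ptrop :: "('v \<Rightarrow> int) \<Rightarrow> 'v pexp \<Rightarrow> int" where
  "ptrop x (PVar v) = x v"
| "ptrop x (PConst r) = 0"
| "ptrop x (PAdd p q) = min (ptrop x p) (ptrop x q)"
| "ptrop x (PMul p q) = ptrop x p + ptrop x q"
| "ptrop x (PDiv p q) = ptrop x p - ptrop x q"

text \<open>Environment with the extra parameter c (variable None) and torus coordinates (Some v).\<close>
definition cenv :: "'a \<Rightarrow> ('v \<Rightarrow> 'a) \<Rightarrow> 'v option \<Rightarrow> 'a" where
  "cenv c x o' = (case o' of None \<Rightarrow> c | Some v \<Rightarrow> x v)"

definition pos_pt :: "('v \<Rightarrow> real) \<Rightarrow> bool" where
  "pos_pt x \<longleftrightarrow> (\<forall>v. x v > 0)"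

text \<open>The action \<theta>^{-1} o e_i^c o \<theta> on the torus, given coordinatewise by positive expressions
  in (c, x).\<close>
definition gact :: "('i \<Rightarrow> 'v \<Rightarrow> 'v option pexp) \<Rightarrow> 'i \<Rightarrow> real \<Rightarrow> ('v \<Rightarrow> real) \<Rightarrow> ('v \<Rightarrow> real)" where
  "gact E i c x = (\<lambda>k. peval (cenv c x) (E i k))"

definition tact :: "('i \<Rightarrow> 'v \<Rightarrow> 'v option pexp) \<Rightarrow> 'i \<Rightarrow> int \<Rightarrow> ('v \<Rightarrow> int) \<Rightarrow> ('v \<Rightarrow> int)" where
  "tact E i n x = (\<lambda>k. ptrop (cenv n x) (E i k))"

text \<open>Indecomposable generalized Cartan matrix of finite type (symmetrizable with positive
  definite symmetrization) = Cartan matrix of a simple finite-dimensional Lie algebra.\<close>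
definition simple_cartan :: "('i::finite \<Rightarrow> 'i \<Rightarrow> int) \<Rightarrow> bool" where
  "simple_cartan A \<longleftrightarrow>
     (\<forall>i. A i i = 2) \<and> (\<forall>i j. i \<noteq> j \<longrightarrow> A i j \<le> 0) \<and> (\<forall>i j. A i j = 0 \<longleftrightarrow> A j i = 0) \<and>
     (\<exists>d::'i \<Rightarrow> real. (\<forall>i. d i > 0) \<and> (\<forall>i j. d i * of_int (A i j) = d j * of_int (A j i)) \<and>
        (\<forall>y::'i \<Rightarrow> real. (\<exists>i. y i \<noteq> 0) \<longrightarrow> (\<Sum>i\<in>UNIV. \<Sum>j\<in>UNIV. d i * of_int (A i j) * y i * y j) > 0)) \<and>
     (\<forall>S::'i set. S \<noteq> {} \<and> S \<noteq> UNIV \<longrightarrow> (\<exists>i\<in>S. \<exists>j. j \<notin> S \<and> A i j \<noteq> 0))"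

text \<open>E i k: k-th coordinate of \<theta>^{-1} o e_i^c o \<theta>;  G i = \<gamma>_i o \<theta>;  Ep i = \<epsilon>_i o \<theta>.
  Identities of rational functions are expressed on the Zariski dense positive real orthant.\<close>
definition pos_geom_crystal ::
  "('i::finite \<Rightarrow> 'i \<Rightarrow> int) \<Rightarrow> ('i \<Rightarrow> 'v \<Rightarrow> 'v option pexp) \<Rightarrow> ('i \<Rightarrow> 'v pexp) \<Rightarrow> ('i \<Rightarrow> 'v pexp) \<Rightarrow> bool" where
  "pos_geom_crystal A E G Ep \<longleftrightarrow>
     (\<forall>i k. pos_exp (E i k)) \<and> (\<forall>i. pos_exp (G i)) \<and> (\<forall>i. pos_exp (Ep i)) \<and>
     \<comment> \<open>unital action\<close>
     (\<forall>i x. pos_pt x \<longrightarrow> gact E i 1 x = x) \<and>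
     (\<forall>i c1 c2 x. pos_pt x \<and> c1 > 0 \<and> c2 > 0 \<longrightarrow>
        gact E i c1 (gact E i c2 x) = gact E i (c1 * c2) x) \<and>
     \<comment> \<open>gamma\<close>
     (\<forall>i j c x. pos_pt x \<and> c > 0 \<longrightarrow>
        peval (gact E i c x) (G j) = c powi (A i j) * peval x (G j)) \<and>
     \<comment> \<open>Verma relations\<close>
     (\<forall>i j c1 c2 x. pos_pt x \<and> c1 > 0 \<and> c2 > 0 \<and> A i j = 0 \<and> A j i = 0 \<longrightarrow>
        gact E i c1 (gact E j c2 x) = gact E j c2 (gact E i c1 x)) \<and>
     (\<forall>i j c1 c2 x. pos_pt x \<and> c1 > 0 \<and> c2 > 0 \<and> A i j = -1 \<and> A j i = -1 \<longrightarrow>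
        gact E i c1 (gact E j (c1*c2) (gact E i c2 x)) =
        gact E j c2 (gact E i (c1*c2) (gact E j c1 x))) \<and>
     (\<forall>i j c1 c2 x. pos_pt x \<and> c1 > 0 \<and> c2 > 0 \<and> A i j = -2 \<and> A j i = -1 \<longrightarrow>
        gact E i c1 (gact E j (c1^2*c2) (gact E i (c1*c2) (gact E j c2 x))) =
        gact E j c2 (gact E i (c1*c2) (gact E j (c1^2*c2) (gact E i c1 x)))) \<and>
     (\<forall>i j c1 c2 x. pos_pt x \<and> c1 > 0 \<and> c2 > 0 \<and> A i j = -3 \<and> A j i = -1 \<longrightarrow>
        gact E i c1 (gact E j (c1^3*c2) (gact E i (c1^2*c2) (gact E j (c1^3*c2^2)
          (gact E i (c1*c2) (gact E j c2 x))))) =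
        gact E j c2 (gact E i (c1*c2) (gact E j (c1^3*c2^2) (gact E i (c1^2*c2)
          (gact E j (c1^3*c2) (gact E i c1 x)))))) \<and>
     \<comment> \<open>epsilon\<close>
     (\<forall>i c x. pos_pt x \<and> c > 0 \<longrightarrow> peval (gact E i c x) (Ep i) = inverse c * peval x (Ep i)) \<and>
     (\<forall>i j c x. pos_pt x \<and> c > 0 \<and> A i j = 0 \<and> A j i = 0 \<longrightarrow>
        peval (gact E j c x) (Ep i) = peval x (Ep i))"

definition upper_half_dec :: "('i \<Rightarrow> 'v \<Rightarrow> 'v option pexp) \<Rightarrow> ('i \<Rightarrow> 'v pexp) \<Rightarrow> 'v pexp \<Rightarrow> bool" where
  "upper_half_dec E Ep F \<longleftrightarrow>
     (\<forall>i c x. pos_pt x \<and> c > 0 \<longrightarrow>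
        peval (gact E i c x) F = peval x F + (inverse c - 1) * peval x (Ep i))"

definition lower_half_dec ::
  "('i \<Rightarrow> 'v \<Rightarrow> 'v option pexp) \<Rightarrow> ('i \<Rightarrow> 'v pexp) \<Rightarrow> ('i \<Rightarrow> 'v pexp) \<Rightarrow> 'v pexp \<Rightarrow> bool" where
  "lower_half_dec E G Ep F \<longleftrightarrow>
     (\<forall>i c x. pos_pt x \<and> c > 0 \<longrightarrow>
        peval (gact E i c x) F = peval x F + (c - 1) * (peval x (Ep i) * peval x (G i)))"

definition tB :: "'v pexp \<Rightarrow> ('v \<Rightarrow> int) set" where
  "tB F = {b. ptrop b F \<ge> 0}"

end

theory Submission
  imports Defs
begin


lemma peval_pos: "pos_exp p \<Longrightarrow> (\<And>v. x v > 0) \<Longrightarrow> peval x p > 0"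
  by (induction p) auto

abbreviation tpt :: "real \<Rightarrow> ('w \<Rightarrow> int) \<Rightarrow> 'w \<Rightarrow> real" where
  "tpt t a \<equiv> (\<lambda>v. t powr (real_of_int (a v)))"

lemma trop_bounds:
  assumes "pos_exp p"
  shows "\<exists>C1 C2. 0<C1 \<and> 0<C2 \<and> (\<forall>t. 0<t \<and> t\<le>1 \<longrightarrow>
     C1 * t powr (ptrop a p) \<le> peval (tpt t a) p \<and> peval (tpt t a) p \<le> C2 * t powr (ptrop a p))"
  using assms
proof (induction p)
  case (PVar v)
  then show ?case by (intro exI[of _ 1]) auto
next
  case (PConst r)
  then show ?case by (intro exI[of _ r]) auto
next
  case (PAdd p q)
  then obtain C1 C2 D1 D2 where C: "0<C1" "0<C2" "0<D1" "0<D2"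
    and bp: "\<forall>t. 0<t \<and> t\<le>1 \<longrightarrow> C1 * t powr (ptrop a p) \<le> peval (tpt t a) p \<and> peval (tpt t a) p \<le> C2 * t powr (ptrop a p)"
    and bq: "\<forall>t. 0<t \<and> t\<le>1 \<longrightarrow> D1 * t powr (ptrop a q) \<le> peval (tpt t a) q \<and> peval (tpt t a) q \<le> D2 * t powr (ptrop a q)"
    by auto
  show ?case
  proof (rule exI[of _ "min C1 D1"], rule exI[of _ "C2 + D2"], intro conjI allI impI)
    fix t :: real assume t: "0<t \<and> t\<le>1"
    let ?P = "peval (tpt t a) p" and ?Q = "peval (tpt t a) q"
    let ?tp = "t powr (ptrop a p)" and ?tq = "t powr (ptrop a q)"
    let ?tm = "t powr (ptrop a (PAdd p q))"
    have ptp: "?tp > 0" "?tq > 0" using t by auto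
    have m1: "?tp \<le> ?tm" "?tq \<le> ?tm"
      using t by (auto intro!: powr_mono')
    have m2: "?tm = ?tp \<or> ?tm = ?tq" by (auto simp: min_def)
    have Pp: "?P \<ge> C1 * ?tp" "?P \<le> C2 * ?tp" "?Q \<ge> D1 * ?tq" "?Q \<le> D2 * ?tq"
      using bp bq t by auto
    have pos: "C1 * ?tp > 0" "D1 * ?tq > 0" using C ptp by auto
    have "min C1 D1 * ?tm \<le> C1 * ?tp + D1 * ?tq"
    proof (cases "?tm = ?tp")
      case True
      have "min C1 D1 * ?tp \<le> C1 * ?tp" using ptp by (intro mult_right_mono) auto
      moreover have "min C1 D1 * ?tm = min C1 D1 * ?tp" using True by simp
      ultimately show ?thesis using pos by linarith
    next
      case False
      then have "?tm = ?tq" using m2 by auto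
      have "min C1 D1 * ?tq \<le> D1 * ?tq" using ptp by (intro mult_right_mono) auto
      moreover have "min C1 D1 * ?tm = min C1 D1 * ?tq" using \<open>?tm = ?tq\<close> by simp
      ultimately show ?thesis using pos by linarith
    qed
    then show "min C1 D1 * ?tm \<le> peval (tpt t a) (PAdd p q)" using Pp by simp
    have "C2 * ?tp \<le> C2 * ?tm" "D2 * ?tq \<le> D2 * ?tm" using m1 C by auto
    then show "peval (tpt t a) (PAdd p q) \<le> (C2 + D2) * t powr (ptrop a (PAdd p q))" using Pp by (simp add: algebra_simps)
  qed (use C in auto)
next
  case (PMul p q)
  then obtain C1 C2 D1 D2 where C: "0<C1" "0<C2" "0<D1" "0<D2"
    and bp: "\<forall>t. 0<t \<and> t\<le>1 \<longrightarrow> C1 * t powr (ptrop a p) \<le> peval (tpt t a) p \<and> peval (tpt t a) p \<le> C2 * t powr (ptrop a p)"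
    and bq: "\<forall>t. 0<t \<and> t\<le>1 \<longrightarrow> D1 * t powr (ptrop a q) \<le> peval (tpt t a) q \<and> peval (tpt t a) q \<le> D2 * t powr (ptrop a q)"
    by auto
  show ?case
  proof (rule exI[of _ "C1 * D1"], rule exI[of _ "C2 * D2"], intro conjI allI impI)
    fix t :: real assume t: "0<t \<and> t\<le>1"
    let ?P = "peval (tpt t a) p" and ?Q = "peval (tpt t a) q"
    let ?tp = "t powr (ptrop a p)" and ?tq = "t powr (ptrop a q)"
    have ptp: "?tp > 0" "?tq > 0" using t by auto
    have e: "t powr (ptrop a (PMul p q)) = ?tp * ?tq" by (simp add: powr_add)
    have Pp: "?P \<ge> C1 * ?tp" "?P \<le> C2 * ?tp" "?Q \<ge> D1 * ?tq" "?Q \<le> D2 * ?tq"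
      using bp bq t by auto
    have "C1 * ?tp > 0" using C ptp by auto
    then have "?P \<ge> 0" using Pp by linarith
    have "D1 * ?tq > 0" using C ptp by auto
    then have "?Q \<ge> 0" using Pp by linarith
    have "(C1 * ?tp) * (D1 * ?tq) \<le> ?P * ?Q"
      using Pp C ptp \<open>?P \<ge> 0\<close> by (intro mult_mono) auto
    then show "C1 * D1 * t powr (ptrop a (PMul p q)) \<le> peval (tpt t a) (PMul p q)"
      by (simp add: powr_add algebra_simps)
    have "?P * ?Q \<le> (C2 * ?tp) * (D2 * ?tq)"
      using Pp C ptp \<open>?Q \<ge> 0\<close> by (intro mult_mono) auto
    then show "peval (tpt t a) (PMul p q) \<le> C2 * D2 * t powr (ptrop a (PMul p q))"
      by (simp add: powr_add algebra_simps)
  qed (use C in auto)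
next
  case (PDiv p q)
  then obtain C1 C2 D1 D2 where C: "0<C1" "0<C2" "0<D1" "0<D2"
    and bp: "\<forall>t. 0<t \<and> t\<le>1 \<longrightarrow> C1 * t powr (ptrop a p) \<le> peval (tpt t a) p \<and> peval (tpt t a) p \<le> C2 * t powr (ptrop a p)"
    and bq: "\<forall>t. 0<t \<and> t\<le>1 \<longrightarrow> D1 * t powr (ptrop a q) \<le> peval (tpt t a) q \<and> peval (tpt t a) q \<le> D2 * t powr (ptrop a q)"
    by auto
  show ?case
  proof (rule exI[of _ "C1 / D2"], rule exI[of _ "C2 / D1"], intro conjI allI impI)
    fix t :: real assume t: "0<t \<and> t\<le>1"
    let ?P = "peval (tpt t a) p" and ?Q = "peval (tpt t a) q"
    let ?tp = "t powr (ptrop a p)" and ?tq = "t powr (ptrop a q)"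
    have ptp: "?tp > 0" "?tq > 0" using t by auto
    have e: "t powr (ptrop a (PDiv p q)) = ?tp / ?tq" by (simp add: powr_diff)
    have Pp: "?P \<ge> C1 * ?tp" "?P \<le> C2 * ?tp" "?Q \<ge> D1 * ?tq" "?Q \<le> D2 * ?tq"
      using bp bq t by auto
    have Qp: "?Q > 0" using Pp C ptp by (meson less_le_trans mult_pos_pos)
    have "C1 * ?tp > 0" using C ptp by auto
    then have "?P \<ge> 0" using Pp by linarith
    have "(C1 * ?tp) / (D2 * ?tq) \<le> ?P / ?Q"
      using Pp C ptp Qp \<open>?P \<ge> 0\<close> by (intro frac_le) auto
    then show "C1 / D2 * t powr (ptrop a (PDiv p q)) \<le> peval (tpt t a) (PDiv p q)"
      by (simp add: powr_diff)
    have "?P / ?Q \<le> (C2 * ?tp) / (D1 * ?tq)"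
      using Pp C ptp Qp by (intro frac_le) auto
    then show "peval (tpt t a) (PDiv p q) \<le> C2 / D1 * t powr (ptrop a (PDiv p q))"
      by (simp add: powr_diff)
  qed (use C in auto)
qed



lemma pow_contra:
  fixes C D :: real and dp dq :: int
  assumes "0<C" "0<D" "dp < dq"
    and H: "\<forall>t. 0<t \<and> t\<le>1 \<longrightarrow> C * t powr dp \<le> D * t powr dq"
  shows False
proof -
  define t where "t = min 1 (C/(2*D))"
  have t0: "0 < t" "t \<le> 1" using assms by (auto simp: t_def)
  have tp: "t powr dp > 0" using t0 by auto
  have "t powr (real_of_int (dq - dp)) \<le> t powr 1"
    using t0 assms(3) by (intro powr_mono') auto
  then have le: "t powr (real_of_int (dq - dp)) \<le> t" using t0 by simp
  have "t powr dq = t powr dp * t powr (real_of_int (dq - dp))"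
    by (simp add: powr_add[symmetric])
  then have "C * t powr dp \<le> D * t powr dp * t powr (real_of_int (dq - dp))"
    using H t0 by auto
  also have "\<dots> \<le> D * t powr dp * t"
    using le assms tp by (intro mult_left_mono) auto
  finally have "C * t powr dp \<le> (D * t) * t powr dp" by (simp add: algebra_simps)
  then have "C \<le> D * t" using tp by simp
  moreover have "D * t \<le> D * (C/(2*D))" using assms by (intro mult_left_mono) (auto simp: t_def)
  ultimately show False using assms by (simp add: field_simps)
qed

lemma trop_unique:
  assumes "pos_exp p" "pos_exp q" "\<And>y. (\<forall>v. y v > 0) \<Longrightarrow> peval y p = peval y q"
  shows "ptrop a p = ptrop a q"
proof -
  obtain C1 C2 where C: "0<C1" "0<C2" and bp: "\<forall>t. 0<t \<and> t\<le>1 \<longrightarrow>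
     C1 * t powr (ptrop a p) \<le> peval (tpt t a) p \<and> peval (tpt t a) p \<le> C2 * t powr (ptrop a p)"
    using trop_bounds[OF assms(1)] by blast
  obtain D1 D2 where D: "0<D1" "0<D2" and bq: "\<forall>t. 0<t \<and> t\<le>1 \<longrightarrow>
     D1 * t powr (ptrop a q) \<le> peval (tpt t a) q \<and> peval (tpt t a) q \<le> D2 * t powr (ptrop a q)"
    using trop_bounds[OF assms(2)] by blast
  have eq: "\<And>t. 0 < t \<Longrightarrow> peval (tpt t a) p = peval (tpt t a) q"
    by (rule assms(3)) auto
  show ?thesis
  proof (rule ccontr)
    assume "ptrop a p \<noteq> ptrop a q"
    then consider "ptrop a p < ptrop a q" | "ptrop a q < ptrop a p" by linarith
    then show False
    proof cases
      case 1
      have "\<forall>t. 0<t \<and> t\<le>1 \<longrightarrow> C1 * t powr (ptrop a p) \<le> D2 * t powr (ptrop a q)"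
        using bp bq eq by fastforce
      then show False using pow_contra[OF C(1) D(2) 1] by blast
    next
      case 2
      have "\<forall>t. 0<t \<and> t\<le>1 \<longrightarrow> D1 * t powr (ptrop a q) \<le> C2 * t powr (ptrop a p)"
        using bp bq eq by fastforce
      then show False using pow_contra[OF D(1) C(2) 2] by blast
    qed
  qed
qed

fun psubst :: "('v \<Rightarrow> 'w pexp) \<Rightarrow> 'v pexp \<Rightarrow> 'w pexp" where
  "psubst s (PVar v) = s v"
| "psubst s (PConst r) = PConst r"
| "psubst s (PAdd p q) = PAdd (psubst s p) (psubst s q)"
| "psubst s (PMul p q) = PMul (psubst s p) (psubst s q)"
| "psubst s (PDiv p q) = PDiv (psubst s p) (psubst s q)"

lemma peval_psubst: "peval y (psubst s p) = peval (\<lambda>v. peval y (s v)) p"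
  by (induction p) auto

lemma ptrop_psubst: "ptrop y (psubst s p) = ptrop (\<lambda>v. ptrop y (s v)) p"
  by (induction p) auto

lemma pos_psubst: "pos_exp p \<Longrightarrow> (\<And>v. pos_exp (s v)) \<Longrightarrow> pos_exp (psubst s p)"
  by (induction p) auto

lemma cenv_eta: "cenv (y None) (\<lambda>v. y (Some v)) = y"
  by (auto simp: cenv_def fun_eq_iff split: option.split)

lemma cenv_Some: "(\<lambda>v. cenv n b (Some v)) = b"
  by (auto simp: cenv_def fun_eq_iff)

lemma arith_core:
  fixes Fn :: "int \<Rightarrow> int"
  assumes H: "\<And>n. min (Fn n) e = min Fb (e - n)" and "Fb \<ge> 0"
  shows "0 \<le> e \<and> Fn e \<ge> 0 \<and> (\<forall>n. 0\<le>n \<and> Fn n \<ge> 0 \<longrightarrow> n \<le> e)"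
proof -
  have he: "min (Fn e) e = 0" using H[of e] assms(2) by simp
  then have e0: "0 \<le> e" by linarith
  moreover have "Fn e \<ge> 0" using he by linarith
  moreover have "n \<le> e" if "0\<le>n" "Fn n \<ge> 0" for n
    using H[of n] that e0 by linarith
  ultimately show ?thesis by blast
qed

theorem proposition4p7:
  fixes A :: "'i::finite \<Rightarrow> 'i \<Rightarrow> int"
    and E :: "'i \<Rightarrow> 'v::finite \<Rightarrow> 'v option pexp"
    and G Ep :: "'i \<Rightarrow> 'v pexp"
    and F :: "'v pexp"
  assumes "simple_cartan A"
    and "pos_geom_crystal A E G Ep"
    and "pos_exp F"
  shows "(upper_half_dec E Ep F \<longrightarrow>
            (\<forall>b\<in>tB F. \<forall>i.
               ptrop b (Ep i) \<in> {n. n \<ge> 0 \<and> tact E i n b \<in> tB F} \<and>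
               (\<forall>n\<in>{n. n \<ge> 0 \<and> tact E i n b \<in> tB F}. n \<le> ptrop b (Ep i))))
       \<and> (lower_half_dec E G Ep F \<longrightarrow>
            (\<forall>b\<in>tB F. \<forall>i.
               ptrop b (Ep i) + ptrop b (G i) \<in> {n. n \<ge> 0 \<and> tact E i (- n) b \<in> tB F} \<and>
               (\<forall>n\<in>{n. n \<ge> 0 \<and> tact E i (- n) b \<in> tB F}. n \<le> ptrop b (Ep i) + ptrop b (G i))))"
proof -
  from assms(2) have posE: "\<And>i k. pos_exp (E i k)" and posG: "\<And>i. pos_exp (G i)"
    and posEp: "\<And>i. pos_exp (Ep i)"
    by (auto simp: pos_geom_crystal_def)
  let ?S = "\<lambda>v. PVar (Some v) :: 'v option pexp"
  have posS: "\<And>p. pos_exp p \<Longrightarrow> pos_exp (psubst ?S p)"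
    by (rule pos_psubst) auto
  have pevS: "\<And>y p. peval y (psubst ?S p) = peval (\<lambda>v. y (Some v)) p"
    by (simp add: peval_psubst)
  have ptrS: "\<And>n b p. ptrop (cenv n b) (psubst ?S p) = ptrop b p"
    by (simp add: ptrop_psubst cenv_Some)
  have ptrE: "\<And>n b i. ptrop (cenv n b) (psubst (E i) F) = ptrop (tact E i n b) F"
    by (simp add: ptrop_psubst tact_def)
  have pevE: "\<And>y i. peval y (psubst (E i) F) = peval (gact E i (y None) (\<lambda>v. y (Some v))) F"
    by (simp add: peval_psubst gact_def cenv_eta)
  have cN: "\<And>n b. cenv n b None = n" by (simp add: cenv_def)
  have upper: "upper_half_dec E Ep F \<Longrightarrow>
            (\<forall>b\<in>tB F. \<forall>i.
               ptrop b (Ep i) \<in> {n. n \<ge> 0 \<and> tact E i n b \<in> tB F} \<and>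
               (\<forall>n\<in>{n. n \<ge> 0 \<and> tact E i n b \<in> tB F}. n \<le> ptrop b (Ep i)))"
  proof (intro ballI allI)
    fix b i assume U: "upper_half_dec E Ep F" and b: "b \<in> tB F"
    let ?L = "PAdd (psubst (E i) F) (psubst ?S (Ep i))"
    let ?R = "PAdd (psubst ?S F) (PMul (PDiv (PConst 1) (PVar None)) (psubst ?S (Ep i)))"
    have eq: "ptrop (cenv n b) ?L = ptrop (cenv n b) ?R" for n
    proof (rule trop_unique)
      show "pos_exp ?L" using posS posEp pos_psubst[of F "E i"] posE assms(3) by auto
      show "pos_exp ?R" using posS posEp assms(3) by auto
      fix y :: "'v option \<Rightarrow> real" assume y: "\<forall>v. y v > 0"
      have c: "y None > 0" using y by auto
      have x: "pos_pt (\<lambda>v. y (Some v))" using y by (auto simp: pos_pt_def)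
      have "peval (gact E i (y None) (\<lambda>v. y (Some v))) F =
          peval (\<lambda>v. y (Some v)) F + (inverse (y None) - 1) * peval (\<lambda>v. y (Some v)) (Ep i)"
        using U c x by (auto simp: upper_half_dec_def)
      then show "peval y ?L = peval y ?R"
        by (simp add: pevS pevE algebra_simps divide_inverse)
    qed
    have H: "min (ptrop (tact E i n b) F) (ptrop b (Ep i)) = min (ptrop b F) (ptrop b (Ep i) - n)" for n
      using eq[of n] by (simp add: ptrS ptrE cN)
    have "ptrop b F \<ge> 0" using b by (simp add: tB_def)
    from arith_core[of "\<lambda>n. ptrop (tact E i n b) F", OF H this]
    show "ptrop b (Ep i) \<in> {n. n \<ge> 0 \<and> tact E i n b \<in> tB F} \<and>
               (\<forall>n\<in>{n. n \<ge> 0 \<and> tact E i n b \<in> tB F}. n \<le> ptrop b (Ep i))"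
      by (auto simp: tB_def)
  qed
  have lower: "lower_half_dec E G Ep F \<Longrightarrow>
            (\<forall>b\<in>tB F. \<forall>i.
               ptrop b (Ep i) + ptrop b (G i) \<in> {n. n \<ge> 0 \<and> tact E i (- n) b \<in> tB F} \<and>
               (\<forall>n\<in>{n. n \<ge> 0 \<and> tact E i (- n) b \<in> tB F}. n \<le> ptrop b (Ep i) + ptrop b (G i)))"
  proof (intro ballI allI)
    fix b i assume U: "lower_half_dec E G Ep F" and b: "b \<in> tB F"
    let ?L = "PAdd (psubst (E i) F) (PMul (psubst ?S (Ep i)) (psubst ?S (G i)))"
    let ?R = "PAdd (psubst ?S F) (PMul (PVar None) (PMul (psubst ?S (Ep i)) (psubst ?S (G i))))"
    have eq: "ptrop (cenv n b) ?L = ptrop (cenv n b) ?R" for n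
    proof (rule trop_unique)
      show "pos_exp ?L" using posS posEp posG pos_psubst[of F "E i"] posE assms(3) by auto
      show "pos_exp ?R" using posS posEp posG assms(3) by auto
      fix y :: "'v option \<Rightarrow> real" assume y: "\<forall>v. y v > 0"
      have c: "y None > 0" using y by auto
      have x: "pos_pt (\<lambda>v. y (Some v))" using y by (auto simp: pos_pt_def)
      have "peval (gact E i (y None) (\<lambda>v. y (Some v))) F =
          peval (\<lambda>v. y (Some v)) F + (y None - 1) * (peval (\<lambda>v. y (Some v)) (Ep i) * peval (\<lambda>v. y (Some v)) (G i))"
        using U c x by (auto simp: lower_half_dec_def)
      then show "peval y ?L = peval y ?R"
        by (simp add: pevS pevE algebra_simps)
    qed
    have H: "min (ptrop (tact E i (- m) b) F) (ptrop b (Ep i) + ptrop b (G i)) =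
       min (ptrop b F) (ptrop b (Ep i) + ptrop b (G i) - m)" for m
      using eq[of "- m"] by (simp add: ptrS ptrE cN algebra_simps)
    have "ptrop b F \<ge> 0" using b by (simp add: tB_def)
    from arith_core[of "\<lambda>m. ptrop (tact E i (- m) b) F", OF H this]
    show "ptrop b (Ep i) + ptrop b (G i) \<in> {n. n \<ge> 0 \<and> tact E i (- n) b \<in> tB F} \<and>
               (\<forall>n\<in>{n. n \<ge> 0 \<and> tact E i (- n) b \<in> tB F}. n \<le> ptrop b (Ep i) + ptrop b (G i))"
      by (auto simp: tB_def)
  qed
  show ?thesis using upper lower by blast
qed

end
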